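(* Let $x\in\mathbb{R}^n$, $\Delta>0$, $p=(n+1)(n+2)/2$, and take the $p$ points $x$; $x+\Delta e_i$ ($i=1,\ldots,n$); $x-\Delta e_i$ ($i=1,\ldots,n$); $x+\Delta(e_i+e_j)$ ($1\le i<j\le n$). Let $\hat Q\in\mathbb{R}^{p\times p}$ be the matrix whose rows are $\phi(\hat s)^T$ for $\hat s=(y-x)/\Delta$ ranging over these points $y$. Then $\|\hat Q^{-1}\|_\infty\le 8$.
   Context: $e_i$ is the $i$-th coordinate vector. $\phi:\mathbb{R}^n\to\mathbb{R}^p$ is the natural quadratic basis $\phi(z)=[1,z_1,\ldots,z_n,\tfrac12z_1^2,z_1z_2,\ldots,z_1z_n,\tfrac12z_2^2,z_2z_3,\ldots,z_{n-1}z_n,\tfrac12z_n^2]^T$. $\|A\|_\infty$ is the maximum absolute row sum. *)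

theory Defs
  imports "Jordan_Normal_Form.Matrix"
begin

definition quad_basis :: "nat \<Rightarrow> real vec \<Rightarrow> real vec" where
  "quad_basis n z = vec_of_list
     ([1] @ [z $ i. i \<leftarrow> [0..<n]] @
      concat [[(if i = j then (z $ i)^2 / 2 else z $ i * z $ j). j \<leftarrow> [i..<n]]. i \<leftarrow> [0..<n]])"

definition interp_points :: "nat \<Rightarrow> real vec \<Rightarrow> real \<Rightarrow> real vec list" where
  "interp_points n x D =
     [x] @ [x + D \<cdot>\<^sub>v unit_vec n i. i \<leftarrow> [0..<n]]
         @ [x - D \<cdot>\<^sub>v unit_vec n i. i \<leftarrow> [0..<n]]
         @ concat [[x + D \<cdot>\<^sub>v (unit_vec n i + unit_vec n j). j \<leftarrow> [Suc i..<n]]. i \<leftarrow> [0..<n]]"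

definition Qhat :: "nat \<Rightarrow> real vec \<Rightarrow> real \<Rightarrow> real mat" where
  "Qhat n x D = mat_of_rows ((n+1)*(n+2) div 2)
     [quad_basis n ((1 / D) \<cdot>\<^sub>v (y - x)). y \<leftarrow> interp_points n x D]"

definition mat_inf_norm :: "real mat \<Rightarrow> real" where
  "mat_inf_norm A = Max {(\<Sum>j<dim_col A. \<bar>A $$ (i, j)\<bar>) | i. i < dim_row A}"

end

theory Submission
  imports Defs "Jordan_Normal_Form.Determinant"
begin

definition PL :: "nat \<Rightarrow> (nat \<times> nat) list" where
  "PL n = concat (map (\<lambda>i. map (Pair i) [i..<n]) [0..<n])"
definition SL :: "nat \<Rightarrow> (nat \<times> nat) list" where
  "SL n = concat (map (\<lambda>i. map (Pair i) [Suc i..<n]) [0..<n])"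
definition mono2 :: "(nat \<Rightarrow> real) \<Rightarrow> nat \<times> nat \<Rightarrow> real" where
  "mono2 g = (\<lambda>(i,j). if i = j then (g i)^2/2 else g i * g j)"
definition Lf :: "nat \<Rightarrow> (nat \<Rightarrow> real) \<Rightarrow> real list" where
  "Lf n g = [1] @ map g [0..<n] @ map (mono2 g) (PL n)"

lemma distinct_pairs: "distinct xs \<Longrightarrow> (\<And>i. distinct (g i)) \<Longrightarrow>
   distinct (concat (map (\<lambda>i. map (Pair i) (g i)) xs))"
  by (induction xs) (auto simp: distinct_map inj_on_def)

lemma set_pairs: "set (concat (map (\<lambda>i. map (Pair i) (g i)) xs)) = {(i,j). i \<in> set xs \<and> j \<in> set (g i)}"
  by auto

lemma distinct_PL: "distinct (PL n)" unfolding PL_def by (rule distinct_pairs) auto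
lemma set_PL: "set (PL n) = {(i,j). i \<le> j \<and> j < n}" unfolding PL_def set_pairs by auto
lemma set_SL: "set (SL n) = {(i,j). i < j \<and> j < n}" unfolding SL_def set_pairs by auto

lemma sum_Suc_n: "(\<Sum>i<n. Suc (f i)) = (\<Sum>i<n. f i) + (n::nat)"
  by (induction n) auto

lemma gsum1: "2 * (\<Sum>i<n. n - i) = n * (n + 1::nat)"
proof (induction n)
  case (Suc n)
  have "(\<Sum>i<Suc n. Suc n - i) = (\<Sum>i<n. Suc (n - i)) + 1"
    by (simp add: Suc_diff_le)
  also have "\<dots> = (\<Sum>i<n. n - i) + n + 1" using sum_Suc_n[of "\<lambda>i. n - i" n] by simp
  finally show ?case using Suc by simp
qed simp

lemma gsum2: "2 * (\<Sum>i<n. n - Suc i) = n * (n - 1::nat)"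
proof -
  have "(\<Sum>i<n. n - i) = (\<Sum>i<n. Suc (n - Suc i))"
    by (rule sum.cong) auto
  also have "\<dots> = (\<Sum>i<n. n - Suc i) + n" by (rule sum_Suc_n)
  finally have "2 * (\<Sum>i<n. n - Suc i) + 2 * n = n * (n+1)" using gsum1[of n] by simp
  then show ?thesis by (cases n) (auto simp: algebra_simps)
qed

lemma len_PL: "length (PL n) = n * (n+1) div 2"
proof -
  have "length (PL n) = (\<Sum>i<n. n - i)"
    unfolding PL_def length_concat by (simp add: comp_def sum_set_upt_conv_sum_list_nat[symmetric] atLeast0LessThan)
  with gsum1[of n] show ?thesis by simp
qed

lemma len_SL: "length (SL n) = n * (n - 1) div 2"
proof -
  have "length (SL n) = (\<Sum>i<n. n - Suc i)"
    unfolding SL_def length_concat by (simp add: comp_def sum_set_upt_conv_sum_list_nat[symmetric] atLeast0LessThan)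
  with gsum2[of n] show ?thesis by simp
qed

lemma quad_basis_eq: "quad_basis n z = vec_of_list (Lf n (\<lambda>i. z $ i))"
  unfolding quad_basis_def Lf_def PL_def mono2_def by (simp add: map_concat comp_def)

lemma interp_eq: "interp_points n x D = [x] @ map (\<lambda>i. x + D \<cdot>\<^sub>v unit_vec n i) [0..<n]
  @ map (\<lambda>i. x - D \<cdot>\<^sub>v unit_vec n i) [0..<n]
  @ map (\<lambda>(i,j). x + D \<cdot>\<^sub>v (unit_vec n i + unit_vec n j)) (SL n)"
  unfolding interp_points_def SL_def by (simp add: map_concat comp_def)


lemma len_Lf: "length (Lf n g) = (n+1)*(n+2) div 2"
proof -
  have "(n+1)*(n+2) = n*(n+1) + 2*(n+1)" by (simp add: algebra_simps)
  then show ?thesis unfolding Lf_def by (simp add: len_PL)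
qed

lemma len_interp: "length (interp_points n x D) = (n+1)*(n+2) div 2"
proof -
  have "(n+1)*(n+2) = n*(n-1) + 2*(2*n+1)" by (cases n) (simp_all add: algebra_simps)
  then show ?thesis unfolding interp_eq by (simp add: len_SL)
qed

lemma Lf0: "Lf n g ! 0 = 1" by (simp add: Lf_def)
lemma Lf1: "i < n \<Longrightarrow> Lf n g ! Suc i = g i" by (simp add: Lf_def nth_append)
lemma Lf2: "t < length (PL n) \<Longrightarrow> Lf n g ! (Suc n + t) = mono2 g (PL n ! t)"
  by (simp add: Lf_def nth_append)
lemma Lf2': "t < length (PL n) \<Longrightarrow> Lf n g ! Suc (n + t) = mono2 g (PL n ! t)"
  using Lf2 by simp
lemma Lf_cong: "(\<And>i. i < n \<Longrightarrow> g i = h i) \<Longrightarrow> Lf n g = Lf n h"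
  unfolding Lf_def mono2_def using set_PL[of n] by (auto intro!: map_cong split: prod.splits)

lemma idx_cases: assumes "c < (n+1)*(n+2) div 2"
  and "c = 0 \<Longrightarrow> R" and "\<And>i. i<n \<Longrightarrow> c = Suc i \<Longrightarrow> R"
  and "\<And>t a b. t < length (PL n) \<Longrightarrow> c = Suc n + t \<Longrightarrow> PL n ! t = (a,b) \<Longrightarrow> a \<le> b \<Longrightarrow> b < n \<Longrightarrow> R"
  shows R
proof -
  have L: "c < Suc n + length (PL n)" using assms(1) len_Lf[of n id] unfolding Lf_def by simp
  show R
  proof (cases "c \<le> n")
    case True
    then show ?thesis using assms(2,3) by (cases c) auto
  next
    case False
    define t where "t = c - Suc n"
    have t: "t < length (PL n)" "c = Suc n + t" using L False unfolding t_def by auto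
    obtain a b where ab: "PL n ! t = (a,b)" by (cases "PL n ! t")
    have "(a,b) \<in> set (PL n)" using t(1) ab nth_mem by metis
    then show ?thesis using assms(4)[OF t ab] set_PL by auto
  qed
qed

definition e :: "nat \<Rightarrow> nat \<Rightarrow> real" where "e a = (\<lambda>i. if i = a then 1 else 0)"

lemma Qentry: assumes "k < (n+1)*(n+2) div 2" "c < (n+1)*(n+2) div 2"
  shows "Qhat n x D $$ (k,c) = Lf n (\<lambda>i. ((1/D) \<cdot>\<^sub>v (interp_points n x D ! k - x)) $ i) ! c"
  using assms unfolding Qhat_def
  by (simp add: mat_of_rows_index len_interp quad_basis_eq vec_of_list_index)

lemma Q0: assumes "x \<in> carrier_vec n" "c < (n+1)*(n+2) div 2"
  shows "Qhat n x D $$ (0,c) = Lf n (\<lambda>_. 0) ! c"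
proof -
  have "Qhat n x D $$ (0,c) = Lf n (\<lambda>i. ((1/D) \<cdot>\<^sub>v (interp_points n x D ! 0 - x)) $ i) ! c"
    by (rule Qentry) (use assms in auto)
  also have "\<dots> = Lf n (\<lambda>_. 0) ! c"
    by (rule arg_cong[where f="\<lambda>l. l ! c"], rule Lf_cong) (use assms in \<open>simp add: interp_eq\<close>)
  finally show ?thesis .
qed

lemma Q1: assumes "x \<in> carrier_vec n" "c < (n+1)*(n+2) div 2" "i < n" "D > 0"
  shows "Qhat n x D $$ (Suc i,c) = Lf n (e i) ! c"
proof -
  have "Qhat n x D $$ (Suc i,c) = Lf n (\<lambda>j. ((1/D) \<cdot>\<^sub>v (interp_points n x D ! Suc i - x)) $ j) ! c"
    by (rule Qentry) (use assms in \<open>auto simp: len_interp[symmetric] interp_eq\<close>)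
  also have "\<dots> = Lf n (e i) ! c"
    by (rule arg_cong[where f="\<lambda>l. l ! c"], rule Lf_cong) (use assms in \<open>simp add: interp_eq nth_append e_def\<close>)
  finally show ?thesis .
qed

lemma Q2: assumes "x \<in> carrier_vec n" "c < (n+1)*(n+2) div 2" "i < n" "D > 0"
  shows "Qhat n x D $$ (Suc (n + i),c) = Lf n (\<lambda>j. - e i j) ! c"
proof -
  have "Qhat n x D $$ (Suc (n + i),c) = Lf n (\<lambda>j. ((1/D) \<cdot>\<^sub>v (interp_points n x D ! Suc (n + i) - x)) $ j) ! c"
    by (rule Qentry) (use assms len_interp[of n x D] in \<open>auto simp: interp_eq\<close>)
  also have "\<dots> = Lf n (\<lambda>j. - e i j) ! c"
    by (rule arg_cong[where f="\<lambda>l. l ! c"], rule Lf_cong) (use assms in \<open>simp add: interp_eq nth_append e_def\<close>)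
  finally show ?thesis .
qed

lemma Q3: assumes "x \<in> carrier_vec n" "c < (n+1)*(n+2) div 2" "s < length (SL n)" "SL n ! s = (a,b)" "D > 0"
  shows "Qhat n x D $$ (Suc (2*n + s),c) = Lf n (\<lambda>j. e a j + e b j) ! c"
proof -
  have ab: "a < n" "b < n" using assms(3,4) set_SL[of n] nth_mem by fastforce+
  have "Qhat n x D $$ (Suc (2*n + s),c) = Lf n (\<lambda>j. ((1/D) \<cdot>\<^sub>v (interp_points n x D ! Suc (2*n + s) - x)) $ j) ! c"
    by (rule Qentry) (use assms len_interp[of n x D] in \<open>auto simp: interp_eq\<close>)
  also have "\<dots> = Lf n (\<lambda>j. e a j + e b j) ! c"
    by (rule arg_cong[where f="\<lambda>l. l ! c"], rule Lf_cong) (use assms ab in \<open>simp add: interp_eq nth_append e_def\<close>)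
  finally show ?thesis .
qed

lemma delta1: "k1 < (P::nat) \<Longrightarrow> (\<Sum>k<P. a * (if k = k1 then 1 else 0) * f k) = a * (f k1::real)"
proof -
  assume "k1 < P"
  have "(\<Sum>k<P. a * (if k = k1 then 1 else 0) * f k) = (\<Sum>k<P. if k = k1 then a * f k else 0)"
    by (rule sum.cong) auto
  also have "\<dots> = a * f k1" using \<open>k1 < P\<close> by (subst sum.delta) auto
  finally show ?thesis .
qed

lemma comb4_sum: assumes "k1 < P" "k2 < P" "k3 < P" "k4 < (P::nat)"
  shows "(\<Sum>k<P. (a1*(if k=k1 then 1 else 0) + a2*(if k=k2 then 1 else 0) + a3*(if k=k3 then 1 else 0) + a4*(if k=k4 then 1 else 0)) * f k)
     = a1 * f k1 + a2 * f k2 + a3 * f k3 + (a4::real) * f k4"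
  using assms by (simp only: distrib_right sum.distrib delta1)

lemma comb4_abs: assumes "k1 < P" "k2 < P" "k3 < P" "k4 < (P::nat)"
  shows "(\<Sum>k<P. \<bar>a1*(if k=k1 then 1 else 0) + a2*(if k=k2 then 1 else 0) + a3*(if k=k3 then 1 else 0) + a4*(if k=k4 then 1 else 0)\<bar>)
     \<le> \<bar>a1\<bar> + \<bar>a2\<bar> + \<bar>a3\<bar> + \<bar>a4::real\<bar>"
proof -
  have "(\<Sum>k<P. \<bar>a1*(if k=k1 then 1 else 0) + a2*(if k=k2 then 1 else 0) + a3*(if k=k3 then 1 else 0) + a4*(if k=k4 then 1 else 0)\<bar>)
     \<le> (\<Sum>k<P. (\<bar>a1\<bar>*(if k=k1 then 1 else 0) + \<bar>a2\<bar>*(if k=k2 then 1 else 0) + \<bar>a3\<bar>*(if k=k3 then 1 else 0) + \<bar>a4\<bar>*(if k=k4 then 1 else 0)) * 1)"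
    by (rule sum_mono) (auto intro!: order.trans[OF abs_triangle_ineq] add_mono)
  also have "\<dots> = \<bar>a1\<bar> + \<bar>a2\<bar> + \<bar>a3\<bar> + \<bar>a4\<bar>"
    using comb4_sum[OF assms, of "\<bar>a1\<bar>" "\<bar>a2\<bar>" "\<bar>a3\<bar>" "\<bar>a4\<bar>" "\<lambda>_. 1"] by simp
  finally show ?thesis .
qed


lemma PL_inj: "t < length (PL n) \<Longrightarrow> t' < length (PL n) \<Longrightarrow> PL n ! t = q \<Longrightarrow> PL n ! t' = q \<Longrightarrow> t = t'"
  using nth_eq_iff_index_eq[OF distinct_PL] by metis

lemma Pfact1: "Suc (2*n) + length (SL n) = (n+1)*(n+2) div 2"
  using len_interp[of n x D] by (simp add: interp_eq)
lemma Pfact2: "Suc n + length (PL n) = (n+1)*(n+2) div 2"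
  using len_Lf[of n g] by (simp add: Lf_def)

lemma use4:
  assumes "ka < P" "kb < P" "kc < P" "kd < (P::nat)" "\<bar>ca\<bar> + \<bar>cb\<bar> + \<bar>cc\<bar> + \<bar>cd\<bar> \<le> (8::real)"
    "\<forall>c<P. ca * Q ka c + cb * Q kb c + cc * Q kc c + cd * Q kd c = (if r = c then 1 else 0)"
  shows "\<exists>w. (\<forall>c<P. (\<Sum>k<P. w k * Q k c) = (if r = c then 1 else 0)) \<and> (\<Sum>k<P. \<bar>w k\<bar>) \<le> 8"
proof (intro exI conjI allI impI)
  let ?w = "\<lambda>k. ca*(if k=ka then 1 else 0) + cb*(if k=kb then 1 else 0) + cc*(if k=kc then 1 else 0) + cd*(if k=kd then 1 else 0)"
  fix c assume "c < P"
  show "(\<Sum>k<P. ?w k * Q k c) = (if r = c then 1 else 0)"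
    using comb4_sum[OF assms(1-4), of ca cb cc cd "\<lambda>k. Q k c"] assms(6) \<open>c < P\<close> by simp
next
  show "(\<Sum>k<P. \<bar>ca*(if k=ka then 1 else 0) + cb*(if k=kb then 1 else 0) + cc*(if k=kc then 1 else 0) + cd*(if k=kd then 1 else 0)\<bar>) \<le> 8"
    using comb4_abs[OF assms(1-4), of ca cb cc cd] assms(5) by simp
qed

lemma row_exists:
  assumes x: "x \<in> carrier_vec n" and D: "D > 0" and r: "r < (n+1)*(n+2) div 2"
  shows "\<exists>w. (\<forall>c<(n+1)*(n+2) div 2. (\<Sum>k<(n+1)*(n+2) div 2. w k * Qhat n x D $$ (k,c)) = (if r = c then 1 else 0))
     \<and> (\<Sum>k<(n+1)*(n+2) div 2. \<bar>w k\<bar>) \<le> 8"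
proof -
  let ?P = "(n+1)*(n+2) div 2"
  let ?Q = "\<lambda>k c. Qhat n x D $$ (k,c)"
  have P1: "Suc (2*n) + length (SL n) = ?P" by (rule Pfact1)
  have P2: "Suc n + length (PL n) = ?P" by (rule Pfact2)
  note inj = nth_eq_iff_index_eq[OF distinct_PL]
  show ?thesis
  proof (rule idx_cases[OF r])
    assume r0: "r = 0"
    show ?thesis
    proof (rule use4[where ka=0 and kb=0 and kc=0 and kd=0 and ca=1 and cb=0 and cc=0 and cd=0])
      show "\<forall>c<?P. 1 * ?Q 0 c + 0 * ?Q 0 c + 0 * ?Q 0 c + 0 * ?Q 0 c = (if r = c then 1 else 0)"
      proof (intro allI impI)
        fix c assume c: "c < ?P"
        show "1 * ?Q 0 c + 0 * ?Q 0 c + 0 * ?Q 0 c + 0 * ?Q 0 c = (if r = c then 1 else 0)"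
          by (rule idx_cases[OF c]) (use c x r0 in \<open>auto simp: Q0 Lf0 Lf1 Lf2 Lf2' mono2_def\<close>)
      qed
    qed (use P1 in auto)
  next
    fix i assume i: "i < n" and ri: "r = Suc i"
    show ?thesis
    proof (rule use4[where ka="Suc i" and kb="Suc n + i" and kc=0 and kd=0 and ca="1/2" and cb="-1/2" and cc=0 and cd=0])
      show "\<forall>c<?P. 1/2 * ?Q (Suc i) c + -1/2 * ?Q (Suc n + i) c + 0 * ?Q 0 c + 0 * ?Q 0 c = (if r = c then 1 else 0)"
      proof (intro allI impI)
        fix c assume c: "c < ?P"
        show "1/2 * ?Q (Suc i) c + -1/2 * ?Q (Suc n + i) c + 0 * ?Q 0 c + 0 * ?Q 0 c = (if r = c then 1 else 0)"
          by (rule idx_cases[OF c]) (use c x ri i D in \<open>auto simp: Q1 Q2 Lf0 Lf1 Lf2 Lf2' mono2_def e_def\<close>)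
      qed
    qed (use P1 P2 i in auto)
  next
    fix t a b assume t: "t < length (PL n)" and rt: "r = Suc n + t" and ab: "PL n ! t = (a,b)" "a \<le> b" "b < n"
    show ?thesis
    proof (cases "a = b")
      case True
      show ?thesis
      proof (rule use4[where ka="Suc a" and kb="Suc n + a" and kc=0 and kd=0 and ca="1" and cb="1" and cc="-2" and cd=0])
        show "\<forall>c<?P. 1 * ?Q (Suc a) c + 1 * ?Q (Suc n + a) c + -2 * ?Q 0 c + 0 * ?Q 0 c = (if r = c then 1 else 0)"
        proof (intro allI impI)
          fix c assume c: "c < ?P"
          show "1 * ?Q (Suc a) c + 1 * ?Q (Suc n + a) c + -2 * ?Q 0 c + 0 * ?Q 0 c = (if r = c then 1 else 0)"
            by (rule idx_cases[OF c]) (use c x rt t ab True D in \<open>auto simp: Q0 Q1 Q2 Lf0 Lf1 Lf2 Lf2' mono2_def e_def inj intro: PL_inj\<close>)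
        qed
      qed (use P1 P2 ab in auto)
    next
      case False
      then have "(a,b) \<in> set (SL n)" using ab set_SL by auto
      then obtain s where s: "s < length (SL n)" "SL n ! s = (a,b)" by (metis in_set_conv_nth)
      show ?thesis
      proof (rule use4[where ka="Suc (2*n) + s" and kb=0 and kc="Suc a" and kd="Suc b" and ca="1" and cb="1" and cc="-1" and cd="-1"])
        show "\<forall>c<?P. 1 * ?Q (Suc (2*n) + s) c + 1 * ?Q 0 c + -1 * ?Q (Suc a) c + -1 * ?Q (Suc b) c = (if r = c then 1 else 0)"
        proof (intro allI impI)
          fix c assume c: "c < ?P"
          show "1 * ?Q (Suc (2*n) + s) c + 1 * ?Q 0 c + -1 * ?Q (Suc a) c + -1 * ?Q (Suc b) c = (if r = c then 1 else 0)"
            by (rule idx_cases[OF c]) (use c x rt t ab False D s in \<open>auto simp: Q0 Q1 Q3 Lf0 Lf1 Lf2 Lf2' mono2_def e_def inj intro: PL_inj\<close>)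
        qed
      qed (use P1 P2 ab s in auto)
    qed
  qed
qed


theorem lemma5p6:
  fixes n :: nat and x :: "real vec" and D :: real
  assumes "x \<in> carrier_vec n" and "D > 0"
  shows "invertible_mat (Qhat n x D) \<and>
         (\<forall>B. inverts_mat (Qhat n x D) B \<and> inverts_mat B (Qhat n x D)
               \<longrightarrow> mat_inf_norm B \<le> 8)"
proof -
  let ?P = "(n+1)*(n+2) div 2"
  let ?Q = "Qhat n x D"
  have Qc: "?Q \<in> carrier_mat ?P ?P" unfolding Qhat_def using len_interp[of n x D]
    by (metis length_map mat_of_rows_carrier(1))
  have "\<forall>r\<in>{..<?P}. \<exists>w. (\<forall>c<?P. (\<Sum>k<?P. w k * ?Q $$ (k,c)) = (if r = c then 1 else 0))
     \<and> (\<Sum>k<?P. \<bar>w k\<bar>) \<le> 8" using row_exists[OF assms] by blast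
  from bchoice[OF this] obtain f where f: "\<forall>r\<in>{..<?P}. (\<forall>c<?P. (\<Sum>k<?P. f r k * ?Q $$ (k,c)) = (if r = c then 1 else 0))
     \<and> (\<Sum>k<?P. \<bar>f r k\<bar>) \<le> 8" by blast
  define W where "W = mat ?P ?P (\<lambda>(r,k). f r k)"
  have Wc: "W \<in> carrier_mat ?P ?P" unfolding W_def by simp
  have WQ: "W * ?Q = 1\<^sub>m ?P"
  proof (rule eq_matI)
    fix r c assume r: "r < dim_row (1\<^sub>m ?P :: real mat)" and c: "c < dim_col (1\<^sub>m ?P :: real mat)"
    have "(W * ?Q) $$ (r,c) = (\<Sum>k<?P. f r k * ?Q $$ (k,c))"
      using Qc r c by (simp add: W_def scalar_prod_def atLeast0LessThan)
    also have "\<dots> = (if r = c then 1 else 0)" using f r c by simp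
    finally show "(W * ?Q) $$ (r,c) = 1\<^sub>m ?P $$ (r,c)" using r c by simp
  qed (use Qc Wc in auto)
  have QW: "?Q * W = 1\<^sub>m ?P" by (rule mat_mult_left_right_inverse[OF Wc Qc WQ])
  show ?thesis
  proof (intro conjI allI impI)
    show "invertible_mat ?Q" unfolding invertible_mat_def inverts_mat_def
      using Qc Wc QW WQ by auto
  next
    fix B assume "inverts_mat ?Q B \<and> inverts_mat B ?Q"
    then have QB: "?Q * B = 1\<^sub>m ?P" and BQ: "B * ?Q = 1\<^sub>m (dim_row B)"
      using Qc by (auto simp: inverts_mat_def)
    have c1: "dim_col B = ?P" using arg_cong[OF QB, of dim_col] by simp
    have c2: "dim_row B = ?P" using arg_cong[OF BQ, of dim_col] Qc by simp
    have Bc: "B \<in> carrier_mat ?P ?P" using c1 c2 by auto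
    have "B = 1\<^sub>m ?P * B" using Bc by simp
    also have "\<dots> = (W * ?Q) * B" using WQ by simp
    also have "\<dots> = W * (?Q * B)" using assoc_mult_mat[OF Wc Qc Bc] .
    also have "\<dots> = W" using QB Wc by simp
    finally have BW: "B = W" .
    have P0: "0 < ?P" by simp
    have S: "{(\<Sum>j<dim_col B. \<bar>B $$ (i, j)\<bar>) | i. i < dim_row B} = (\<lambda>i. \<Sum>j<?P. \<bar>f i j\<bar>) ` {..<?P}"
    proof -
      have eq: "\<And>i. i < ?P \<Longrightarrow> (\<Sum>j<?P. \<bar>W $$ (i, j)\<bar>) = (\<Sum>j<?P. \<bar>f i j\<bar>)"
        by (rule sum.cong) (auto simp: W_def)
      have "{(\<Sum>j<dim_col B. \<bar>B $$ (i, j)\<bar>) | i. i < dim_row B} = (\<lambda>i. \<Sum>j<?P. \<bar>W $$ (i, j)\<bar>) ` {..<?P}"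
        unfolding c1 c2 unfolding BW by blast
      also have "\<dots> = (\<lambda>i. \<Sum>j<?P. \<bar>f i j\<bar>) ` {..<?P}"
        by (rule image_cong[OF refl], rule eq, simp)
      finally show ?thesis .
    qed
    show "mat_inf_norm B \<le> 8" unfolding mat_inf_norm_def S
      using f P0 by (subst Max_le_iff) auto
  qed
qed

end
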